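(* Let $P_n$ be a polynomial over ${\cal A}_v$. If $v=2$, then ${\cal G}_l(P_n)$ and ${\cal G}_l(P_n,0)$ are associative; if $v=3$, they are alternative; in both cases $v=2$ and $v=3$ they have no divisors of zero.
   Context: ${\cal A}_v$ is the real Cayley-Dickson algebra of dimension $2^v$ (${\cal A}_2=\mathbb H$ quaternions, ${\cal A}_3$ octonions). A polynomial over ${\cal A}_v$ is $P_n(z)=\sum_{0\le|k|\le n}(a_k,z^k)$ with $(a_k,z^k)=\{a_{k_1}z^{k_1}\cdots a_{k_m}z^{k_m}\}_{q(2m)}$ a product of coefficients $a_{k_j}\in{\cal A}_v$ and powers of $z$ taken with a fixed prescribed bracketing. ${\cal A}_v^{\bullet}={\cal A}_v\setminus\{0\}$. ${\cal G}_l(P_n,0)$ is the set of $g\in{\cal A}_v^{\bullet}$ for which there exist zeros $z_0,z_1$ of $P_n$ with $gz_0=z_1$ and $g^{-1}z_1=z_0$; ${\cal G}_l(P_n):=\{g\in{\cal A}_v^{\bullet}: P_n(gz)=P_n(z)\ \forall z\in{\cal A}_v\}$, both considered with the multiplication of ${\cal A}_v$. *)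

theory Defs
  imports Complex_Main
begin

text \<open>Real Cayley-Dickson algebra A_v of dimension 2^v.
  Doubling convention: (a,b)(c,d) = (ac - conj(d) b, d a + b conj(c)),
  conj(a,b) = (conj a, -b); coordinates below 2^v form the first half,
  coordinates in [2^v, 2^(v+1)) the second half.\<close>

definition cd_carrier :: "nat \<Rightarrow> (nat \<Rightarrow> real) set" where
  "cd_carrier v = {x. \<forall>i. 2 ^ v \<le> i \<longrightarrow> x i = 0}"

definition cd_zero :: "nat \<Rightarrow> real" where
  "cd_zero = (\<lambda>i. 0)"

definition cd_nonzero :: "nat \<Rightarrow> (nat \<Rightarrow> real) set" where
  "cd_nonzero v = cd_carrier v - {cd_zero}"

definition cd_add :: "(nat \<Rightarrow> real) \<Rightarrow> (nat \<Rightarrow> real) \<Rightarrow> nat \<Rightarrow> real" where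
  "cd_add x y = (\<lambda>i. x i + y i)"

definition cd_sub :: "(nat \<Rightarrow> real) \<Rightarrow> (nat \<Rightarrow> real) \<Rightarrow> nat \<Rightarrow> real" where
  "cd_sub x y = (\<lambda>i. x i - y i)"

definition cd_scale :: "real \<Rightarrow> (nat \<Rightarrow> real) \<Rightarrow> nat \<Rightarrow> real" where
  "cd_scale r x = (\<lambda>i. r * x i)"

definition cd_lo :: "nat \<Rightarrow> (nat \<Rightarrow> real) \<Rightarrow> nat \<Rightarrow> real" where
  "cd_lo h x = (\<lambda>i. if i < h then x i else 0)"

definition cd_hi :: "nat \<Rightarrow> (nat \<Rightarrow> real) \<Rightarrow> nat \<Rightarrow> real" where
  "cd_hi h x = (\<lambda>i. if i < h then x (i + h) else 0)"

definition cd_pair :: "nat \<Rightarrow> (nat \<Rightarrow> real) \<Rightarrow> (nat \<Rightarrow> real) \<Rightarrow> nat \<Rightarrow> real" where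
  "cd_pair h p q = (\<lambda>i. if i < h then p i else if i < 2 * h then q (i - h) else 0)"

primrec cd_conj :: "nat \<Rightarrow> (nat \<Rightarrow> real) \<Rightarrow> nat \<Rightarrow> real" where
  "cd_conj 0 x = (\<lambda>i. if i = 0 then x 0 else 0)"
| "cd_conj (Suc v) x =
     cd_pair (2 ^ v) (cd_conj v (cd_lo (2 ^ v) x)) (cd_scale (-1) (cd_hi (2 ^ v) x))"

primrec cd_mult :: "nat \<Rightarrow> (nat \<Rightarrow> real) \<Rightarrow> (nat \<Rightarrow> real) \<Rightarrow> nat \<Rightarrow> real" where
  "cd_mult 0 x y = (\<lambda>i. if i = 0 then x 0 * y 0 else 0)"
| "cd_mult (Suc v) x y =
     (let h = 2 ^ v; a = cd_lo h x; b = cd_hi h x; c = cd_lo h y; d = cd_hi h y in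
      cd_pair h (cd_sub (cd_mult v a c) (cd_mult v (cd_conj v d) b))
                (cd_add (cd_mult v d a) (cd_mult v b (cd_conj v c))))"

definition cd_normsq :: "nat \<Rightarrow> (nat \<Rightarrow> real) \<Rightarrow> real" where
  "cd_normsq v x = (\<Sum>i<2 ^ v. (x i)\<^sup>2)"

definition cd_inv :: "nat \<Rightarrow> (nat \<Rightarrow> real) \<Rightarrow> nat \<Rightarrow> real" where
  "cd_inv v x = cd_scale (1 / cd_normsq v x) (cd_conj v x)"

text \<open>Monomials: products of coefficients and the variable z with a fixed bracketing
  (an expression tree); a polynomial is a finite sum of monomials.\<close>

datatype cd_mono = Coef "nat \<Rightarrow> real" | Var | Mul cd_mono cd_mono

primrec mono_coeffs :: "cd_mono \<Rightarrow> (nat \<Rightarrow> real) set" where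
  "mono_coeffs (Coef a) = {a}"
| "mono_coeffs Var = {}"
| "mono_coeffs (Mul m1 m2) = mono_coeffs m1 \<union> mono_coeffs m2"

primrec mono_eval :: "nat \<Rightarrow> cd_mono \<Rightarrow> (nat \<Rightarrow> real) \<Rightarrow> nat \<Rightarrow> real" where
  "mono_eval v (Coef a) z = a"
| "mono_eval v Var z = z"
| "mono_eval v (Mul m1 m2) z = cd_mult v (mono_eval v m1 z) (mono_eval v m2 z)"

type_synonym cd_poly = "cd_mono list"

definition is_cd_poly :: "nat \<Rightarrow> cd_poly \<Rightarrow> bool" where
  "is_cd_poly v P \<longleftrightarrow> (\<forall>m \<in> set P. mono_coeffs m \<subseteq> cd_carrier v)"

definition poly_eval :: "nat \<Rightarrow> cd_poly \<Rightarrow> (nat \<Rightarrow> real) \<Rightarrow> nat \<Rightarrow> real" where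
  "poly_eval v P z = foldr (\<lambda>m acc. cd_add (mono_eval v m z) acc) P cd_zero"

definition G_l0 :: "nat \<Rightarrow> cd_poly \<Rightarrow> (nat \<Rightarrow> real) set" where
  "G_l0 v P = {g \<in> cd_nonzero v. \<exists>z0 \<in> cd_carrier v. \<exists>z1 \<in> cd_carrier v.
      poly_eval v P z0 = cd_zero \<and> poly_eval v P z1 = cd_zero \<and>
      cd_mult v g z0 = z1 \<and> cd_mult v (cd_inv v g) z1 = z0}"

definition G_l :: "nat \<Rightarrow> cd_poly \<Rightarrow> (nat \<Rightarrow> real) set" where
  "G_l v P = {g \<in> cd_nonzero v. \<forall>z \<in> cd_carrier v.
      poly_eval v P (cd_mult v g z) = poly_eval v P z}"

definition cd_associative_on :: "nat \<Rightarrow> (nat \<Rightarrow> real) set \<Rightarrow> bool" where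
  "cd_associative_on v S \<longleftrightarrow> (\<forall>a\<in>S. \<forall>b\<in>S. \<forall>c\<in>S.
      cd_mult v (cd_mult v a b) c = cd_mult v a (cd_mult v b c))"

definition cd_alternative_on :: "nat \<Rightarrow> (nat \<Rightarrow> real) set \<Rightarrow> bool" where
  "cd_alternative_on v S \<longleftrightarrow> (\<forall>a\<in>S. \<forall>b\<in>S.
      cd_mult v (cd_mult v a a) b = cd_mult v a (cd_mult v a b) \<and>
      cd_mult v (cd_mult v a b) b = cd_mult v a (cd_mult v b b))"

definition cd_no_zero_divisors_on :: "nat \<Rightarrow> (nat \<Rightarrow> real) set \<Rightarrow> bool" where
  "cd_no_zero_divisors_on v S \<longleftrightarrow> (\<forall>a\<in>S. \<forall>b\<in>S. cd_mult v a b \<noteq> cd_zero)"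

end

theory Submission imports Defs begin
lemmas cdd = numeral_eq_Suc cd_pair_def cd_lo_def cd_hi_def cd_sub_def cd_add_def cd_scale_def Let_def

lemma mult_high: "2 ^ v \<le> i \<Longrightarrow> cd_mult v x y i = 0"
  by (cases v) (auto simp: cd_pair_def Let_def)

schematic_goal o0: "cd_mult 3 x y 0 = ?X" by (simp add: cdd)
schematic_goal o1: "cd_mult 3 x y (Suc 0) = ?X" by (simp add: cdd)
schematic_goal o2: "cd_mult 3 x y (Suc (Suc 0)) = ?X" by (simp add: cdd)
schematic_goal o3: "cd_mult 3 x y (Suc (Suc (Suc 0))) = ?X" by (simp add: cdd)
schematic_goal o4: "cd_mult 3 x y (Suc (Suc (Suc (Suc 0)))) = ?X" by (simp add: cdd)
schematic_goal o5: "cd_mult 3 x y (Suc (Suc (Suc (Suc (Suc 0))))) = ?X" by (simp add: cdd)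
schematic_goal o6: "cd_mult 3 x y (Suc (Suc (Suc (Suc (Suc (Suc 0)))))) = ?X" by (simp add: cdd)
schematic_goal o7: "cd_mult 3 x y (Suc (Suc (Suc (Suc (Suc (Suc (Suc 0))))))) = ?X" by (simp add: cdd)
lemmas os = o0 o1 o2 o3 o4 o5 o6 o7

lemma idx8: "(i::nat) < 8 \<Longrightarrow> i = 0 \<or> i = Suc 0 \<or> i = Suc(Suc 0) \<or> i = Suc(Suc(Suc 0))
  \<or> i = Suc(Suc(Suc(Suc 0))) \<or> i = Suc(Suc(Suc(Suc(Suc 0)))) \<or> i = Suc(Suc(Suc(Suc(Suc(Suc 0)))))
  \<or> i = Suc(Suc(Suc(Suc(Suc(Suc(Suc 0))))))" by auto

lemma alt3a: "cd_mult 3 (cd_mult 3 a a) b = cd_mult 3 a (cd_mult 3 a b)"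
proof
  fix i show "cd_mult 3 (cd_mult 3 a a) b i = cd_mult 3 a (cd_mult 3 a b) i"
  proof (cases "i < 8")
    case True then show ?thesis apply - apply (drule idx8)
      by (elim disjE; hypsubst_thin; simp only: os; algebra)
  next
    case False then show ?thesis using mult_high[of 3 i] by simp
  qed
qed

lemma alt3b: "cd_mult 3 (cd_mult 3 a b) b = cd_mult 3 a (cd_mult 3 b b)"
proof
  fix i show "cd_mult 3 (cd_mult 3 a b) b i = cd_mult 3 a (cd_mult 3 b b) i"
  proof (cases "i < 8")
    case True then show ?thesis apply - apply (drule idx8)
      by (elim disjE; hypsubst_thin; simp only: os; algebra)
  next
    case False then show ?thesis using mult_high[of 3 i] by simp
  qed
qed

lemma norm3: "cd_normsq 3 (cd_mult 3 a b) = cd_normsq 3 a * cd_normsq 3 b"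
proof -
  have e: "(2::nat)^3 = Suc(Suc(Suc(Suc(Suc(Suc(Suc(Suc 0)))))))" by simp
  show ?thesis unfolding cd_normsq_def e
  apply (simp only: sum.lessThan_Suc lessThan_0 sum.empty os power2_eq_square)
  by algebra
qed

schematic_goal q0: "cd_mult 2 x y 0 = ?X" by (simp add: cdd)
schematic_goal q1: "cd_mult 2 x y (Suc 0) = ?X" by (simp add: cdd)
schematic_goal q2: "cd_mult 2 x y (Suc (Suc 0)) = ?X" by (simp add: cdd)
schematic_goal q3: "cd_mult 2 x y (Suc (Suc (Suc 0))) = ?X" by (simp add: cdd)
lemmas qs = q0 q1 q2 q3

lemma idx4: "(i::nat) < 4 \<Longrightarrow> i = 0 \<or> i = Suc 0 \<or> i = Suc(Suc 0) \<or> i = Suc(Suc(Suc 0))" by auto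

lemma assoc2: "cd_mult 2 (cd_mult 2 a b) c = cd_mult 2 a (cd_mult 2 b c)"
proof
  fix i show "cd_mult 2 (cd_mult 2 a b) c i = cd_mult 2 a (cd_mult 2 b c) i"
  proof (cases "i < 4")
    case True then show ?thesis apply - apply (drule idx4)
      by (elim disjE; hypsubst_thin; simp only: qs; algebra)
  next
    case False then show ?thesis using mult_high[of 2 i] by simp
  qed
qed

lemma norm2: "cd_normsq 2 (cd_mult 2 a b) = cd_normsq 2 a * cd_normsq 2 b"
proof -
  have e: "(2::nat)^2 = Suc(Suc(Suc(Suc 0)))" by simp
  show ?thesis unfolding cd_normsq_def e
  apply (simp only: sum.lessThan_Suc lessThan_0 sum.empty qs power2_eq_square)
  by algebra
qed

lemma normsq_pos: assumes "a \<in> cd_nonzero v" shows "cd_normsq v a > 0"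
proof -
  from assms have c: "a \<in> cd_carrier v" and nz: "a \<noteq> cd_zero" by (auto simp: cd_nonzero_def)
  from nz obtain i where i: "a i \<noteq> 0" unfolding cd_zero_def by auto
  with c have "i < 2 ^ v" unfolding cd_carrier_def by (metis (mono_tags) mem_Collect_eq not_le)
  then show ?thesis unfolding cd_normsq_def
    by (intro sum_pos2[of _ i]) (use i in auto)
qed

lemma nzd: assumes "v = 2 \<or> v = 3" "a \<in> cd_nonzero v" "b \<in> cd_nonzero v"
  shows "cd_mult v a b \<noteq> cd_zero"
proof
  assume h: "cd_mult v a b = cd_zero"
  have "cd_normsq v (cd_mult v a b) = cd_normsq v a * cd_normsq v b"
    using assms(1) norm2 norm3 by auto
  moreover have "cd_normsq v cd_zero = 0" by (simp add: cd_normsq_def cd_zero_def)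
  moreover have "cd_normsq v a * cd_normsq v b > 0" using normsq_pos assms by simp
  ultimately show False using h by (metis less_irrefl)
qed

lemma sub1: "G_l v P \<subseteq> cd_nonzero v" by (auto simp: G_l_def)
lemma sub2: "G_l0 v P \<subseteq> cd_nonzero v" by (auto simp: G_l0_def)

theorem corollary6:
  fixes v :: nat and P :: cd_poly
  assumes "is_cd_poly v P"
  shows "(v = 2 \<longrightarrow> cd_associative_on v (G_l v P) \<and> cd_associative_on v (G_l0 v P))
       \<and> (v = 3 \<longrightarrow> cd_alternative_on v (G_l v P) \<and> cd_alternative_on v (G_l0 v P))
       \<and> (v = 2 \<or> v = 3 \<longrightarrow> cd_no_zero_divisors_on v (G_l v P)
                            \<and> cd_no_zero_divisors_on v (G_l0 v P))"
proof (intro conjI impI)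
  assume "v = 2"
  then show "cd_associative_on v (G_l v P)" "cd_associative_on v (G_l0 v P)"
    unfolding cd_associative_on_def using assoc2 by auto
next
  assume "v = 3"
  then show "cd_alternative_on v (G_l v P)" "cd_alternative_on v (G_l0 v P)"
    unfolding cd_alternative_on_def using alt3a alt3b by auto
next
  assume h: "v = 2 \<or> v = 3"
  show "cd_no_zero_divisors_on v (G_l v P)" "cd_no_zero_divisors_on v (G_l0 v P)"
    unfolding cd_no_zero_divisors_on_def using nzd[OF h] sub1[of v P] sub2[of v P] by blast+
qed
end
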